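(* Let $S>1/2$ and $\beta<1/2$. Then for every $t\in\mathbb{R}$ the trilinear operator $R_3$ defined in the context satisfies $$\|R_3(u,v,w)\|_{\dot H^{-S}}\le c_6'(S,\beta)\|u\|_{\dot H^{-\beta}}\|v\|_{\dot H^0}\|w\|_{\dot H^0},$$ with a constant $c_6'(S,\beta)$ depending only on $S,\beta$.
   Context: Write $\mathbb{Z}_0=\mathbb{Z}\setminus\{0\}$. For $s\in\mathbb{R}$, $\dot H^s$ denotes the Hilbert space of complex sequences $v=(v_k)_{k\in\mathbb{Z}_0}$ with $\|v\|_{\dot H^s}^2=\sum_{k\in\mathbb{Z}_0}|k|^{2s}|v_k|^2<\infty$. For $t\in\mathbb{R}$, $$R_3(u,v,w)_k=\sum_{k_1+k_2+k_3=k,\ k_1,k_2,k_3\in\mathbb{Z}_0}\frac{e^{3i(k_1+k_2)(k_2+k_3)(k_3+k_1)t}}{k_1}u_{k_1}v_{k_2}w_{k_3},\qquad k\in\mathbb{Z}_0.$$ *)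

theory Defs
  imports "HOL-Analysis.Analysis"
begin

text \<open>Sequences indexed by the nonzero integers are modelled as functions
  int \<Rightarrow> complex; the value at index 0 is ignored everywhere.\<close>

definition Z0 :: "int set" where
  "Z0 = UNIV - {0}"

definition in_Hdot :: "real \<Rightarrow> (int \<Rightarrow> complex) \<Rightarrow> bool" where
  "in_Hdot s v \<longleftrightarrow> (\<lambda>k. real_of_int \<bar>k\<bar> powr (2 * s) * (cmod (v k))\<^sup>2) summable_on Z0"

definition Hdot_norm :: "real \<Rightarrow> (int \<Rightarrow> complex) \<Rightarrow> real" where
  "Hdot_norm s v = sqrt (\<Sum>\<^sub>\<infinity>k\<in>Z0. real_of_int \<bar>k\<bar> powr (2 * s) * (cmod (v k))\<^sup>2)"

definition R3_index :: "int \<Rightarrow> (int \<times> int \<times> int) set" where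
  "R3_index k = {(k1, k2, k3). k1 + k2 + k3 = k \<and> k1 \<noteq> 0 \<and> k2 \<noteq> 0 \<and> k3 \<noteq> 0}"

definition R3_term :: "real \<Rightarrow> (int \<Rightarrow> complex) \<Rightarrow> (int \<Rightarrow> complex) \<Rightarrow> (int \<Rightarrow> complex)
    \<Rightarrow> int \<times> int \<times> int \<Rightarrow> complex" where
  "R3_term t u v w = (\<lambda>(k1, k2, k3).
     exp (\<i> * of_real (3 * real_of_int ((k1 + k2) * (k2 + k3) * (k3 + k1)) * t))
       / of_int k1 * u k1 * v k2 * w k3)"

definition R3 :: "real \<Rightarrow> (int \<Rightarrow> complex) \<Rightarrow> (int \<Rightarrow> complex) \<Rightarrow> (int \<Rightarrow> complex)
    \<Rightarrow> int \<Rightarrow> complex" where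
  "R3 t u v w k = (\<Sum>\<^sub>\<infinity>x\<in>R3_index k. R3_term t u v w x)"

end

theory Submission imports Defs begin
lemma CS_infsum:
  fixes f g :: "'a \<Rightarrow> real"
  assumes f0: "\<And>x. x \<in> X \<Longrightarrow> f x \<ge> 0" and g0: "\<And>x. x \<in> X \<Longrightarrow> g x \<ge> 0"
    and fs: "(\<lambda>x. (f x)\<^sup>2) summable_on X" and gs: "(\<lambda>x. (g x)\<^sup>2) summable_on X"
  shows "(\<lambda>x. f x * g x) summable_on X \<and>
    (\<Sum>\<^sub>\<infinity>x\<in>X. f x * g x) \<le> sqrt (\<Sum>\<^sub>\<infinity>x\<in>X. (f x)\<^sup>2) * sqrt (\<Sum>\<^sub>\<infinity>x\<in>X. (g x)\<^sup>2)"
proof -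
  let ?B = "sqrt (\<Sum>\<^sub>\<infinity>x\<in>X. (f x)\<^sup>2) * sqrt (\<Sum>\<^sub>\<infinity>x\<in>X. (g x)\<^sup>2)"
  have fin: "(\<Sum>x\<in>F. f x * g x) \<le> ?B" if F: "finite F" "F \<subseteq> X" for F
  proof -
    have "(\<Sum>x\<in>F. f x * g x)\<^sup>2 \<le> (\<Sum>x\<in>F. (f x)\<^sup>2) * (\<Sum>x\<in>F. (g x)\<^sup>2)"
      by (rule Cauchy_Schwarz_ineq_sum)
    also have "\<dots> \<le> (\<Sum>\<^sub>\<infinity>x\<in>X. (f x)\<^sup>2) * (\<Sum>\<^sub>\<infinity>x\<in>X. (g x)\<^sup>2)"
      by (intro mult_mono finite_sum_le_infsum fs gs F sum_nonneg infsum_nonneg) auto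
    finally have "\<bar>\<Sum>x\<in>F. f x * g x\<bar> \<le> sqrt ((\<Sum>\<^sub>\<infinity>x\<in>X. (f x)\<^sup>2) * (\<Sum>\<^sub>\<infinity>x\<in>X. (g x)\<^sup>2))"
      using real_le_rsqrt real_sqrt_abs by (metis real_sqrt_le_iff)
    then show ?thesis by (simp add: real_sqrt_mult)
  qed
  have nn: "\<And>x. x \<in> X \<Longrightarrow> f x * g x \<ge> 0" using f0 g0 by simp
  have bdd: "bdd_above (sum (\<lambda>x. f x * g x) ` {F. F\<subseteq>X \<and> finite F})"
    using fin by (auto intro!: bdd_aboveI2)
  have s: "(\<lambda>x. f x * g x) summable_on X"
    by (rule nonneg_bdd_above_summable_on[OF nn bdd])
  have "(\<Sum>\<^sub>\<infinity>x\<in>X. f x * g x) = (SUP F\<in>{F. finite F \<and> F\<subseteq>X}. sum (\<lambda>x. f x * g x) F)"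
    by (rule nonneg_bdd_above_infsum[OF nn bdd])
  also have "\<dots> \<le> ?B"
  proof (rule cSUP_least)
    show "{F. finite F \<and> F \<subseteq> X} \<noteq> {}" by auto
  qed (use fin in auto)
  finally show ?thesis using s by simp
qed

lemma powr_summable_Z0:
  assumes "p > 1"
  shows "(\<lambda>k::int. real_of_int \<bar>k\<bar> powr (-p)) summable_on Z0"
proof -
  have "summable (\<lambda>n::nat. real n powr (-p))"
    using assms by (subst summable_real_powr_iff) simp
  then have s: "(\<lambda>n::nat. real n powr (-p)) summable_on UNIV"
    by (subst summable_on_UNIV_nonneg_real_iff) auto
  have pos: "(\<lambda>k::int. real_of_int \<bar>k\<bar> powr (-p)) summable_on {k. k > 0}"
  proof -
    have "(\<lambda>n::nat. real_of_int \<bar>int n\<bar> powr (-p)) summable_on {n. n > 0}"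
      using summable_on_subset[OF s] by simp
    then show ?thesis
      by (subst (asm) summable_on_reindex_bij_witness[where j = int and i = nat and T = "{k. k > 0}"]) auto
  qed
  have neg: "(\<lambda>k::int. real_of_int \<bar>k\<bar> powr (-p)) summable_on {k. k < 0}"
  proof -
    have "(\<lambda>n::nat. real_of_int \<bar>- int n\<bar> powr (-p)) summable_on {n. n > 0}"
      using summable_on_subset[OF s] by simp
    then show ?thesis
      by (subst (asm) summable_on_reindex_bij_witness[where j = "\<lambda>n. - int n" and i = "\<lambda>k. nat (-k)" and T = "{k. k < 0}"]) auto
  qed
  have "Z0 = {k. k > 0} \<union> {k. k < 0}" unfolding Z0_def by auto
  then show ?thesis using summable_on_union[OF pos neg] by simp
qed

lemma Z0_mem[simp]: "k \<in> Z0 \<longleftrightarrow> k \<noteq> 0" unfolding Z0_def by auto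
lemma summable_on_cong': "f summable_on A \<Longrightarrow> (\<And>x. x\<in>A \<Longrightarrow> f x = g x) \<Longrightarrow> g summable_on A"
  using summable_on_cong[of A f g] by simp
lemma my_infsum_cong: "(\<And>x. x\<in>A \<Longrightarrow> f x = g x) \<Longrightarrow> infsum f A = infsum g A"
  by (rule infsum_cong)
lemma L2_0:
  assumes "in_Hdot 0 v"
  shows "(\<lambda>k. (cmod (v k))\<^sup>2) summable_on Z0" "Hdot_norm 0 v = sqrt (\<Sum>\<^sub>\<infinity>k\<in>Z0. (cmod (v k))\<^sup>2)"
proof -
  have e: "\<And>k. k \<in> Z0 \<Longrightarrow> real_of_int \<bar>k\<bar> powr (2 * 0) * (cmod (v k))\<^sup>2 = (cmod (v k))\<^sup>2"
    by simp
  have "(\<lambda>k. real_of_int \<bar>k\<bar> powr (2 * 0) * (cmod (v k))\<^sup>2) summable_on Z0"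
    using assms unfolding in_Hdot_def by simp
  then show "(\<lambda>k. (cmod (v k))\<^sup>2) summable_on Z0" by (rule summable_on_cong') (rule e)
  have "(\<Sum>\<^sub>\<infinity>k\<in>Z0. real_of_int \<bar>k\<bar> powr (2 * 0) * (cmod (v k))\<^sup>2) = (\<Sum>\<^sub>\<infinity>k\<in>Z0. (cmod (v k))\<^sup>2)"
    by (rule my_infsum_cong) (rule e)
  then show "Hdot_norm 0 v = sqrt (\<Sum>\<^sub>\<infinity>k\<in>Z0. (cmod (v k))\<^sup>2)"
    unfolding Hdot_norm_def by simp
qed

lemma Hdot_nonneg: "Hdot_norm s v \<ge> 0"
  unfolding Hdot_norm_def by (intro real_sqrt_ge_zero infsum_nonneg) simp

lemma norm_R3_term: "norm (R3_term t u v w (k1,k2,k3)) =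
   cmod (u k1) / real_of_int \<bar>k1\<bar> * cmod (v k2) * cmod (w k3)"
  unfolding R3_term_def by (simp add: norm_mult norm_divide)

lemma sq_powr: "((x::real) powr a)\<^sup>2 = x powr (2*a)"
proof -
  have "x powr (2*a) = x powr (a + a)" by (simp only: mult_2)
  also have "\<dots> = x powr a * x powr a" by (rule powr_add)
  finally show ?thesis by (simp only: power2_eq_square)
qed

lemma a_bound:
  assumes "\<beta> < 1/2" "in_Hdot (-\<beta>) u"
  shows "(\<lambda>k. cmod (u k) / real_of_int \<bar>k\<bar>) summable_on Z0 \<and>
     (\<Sum>\<^sub>\<infinity>k\<in>Z0. cmod (u k) / real_of_int \<bar>k\<bar>) \<le>
        Hdot_norm (-\<beta>) u * sqrt (\<Sum>\<^sub>\<infinity>k\<in>Z0. real_of_int \<bar>k\<bar> powr (-(2 - 2*\<beta>)))"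
proof -
  define f where "f k = real_of_int \<bar>k\<bar> powr (-\<beta>) * cmod (u k)" for k
  define g where "g k = real_of_int \<bar>k\<bar> powr (\<beta> - 1)" for k
  have ef: "(f k)\<^sup>2 = real_of_int \<bar>k\<bar> powr (2 * - \<beta>) * (cmod (u k))\<^sup>2" for k
    unfolding f_def by (simp only: power_mult_distrib sq_powr)
  have eg: "(g k)\<^sup>2 = real_of_int \<bar>k\<bar> powr (-(2 - 2*\<beta>))" for k
    unfolding g_def by (simp only: sq_powr) (simp add: algebra_simps)
  have efg: "f k * g k = cmod (u k) / real_of_int \<bar>k\<bar>" if "k \<in> Z0" for k
  proof -
    from that have "real_of_int \<bar>k\<bar> > 0" by simp
    then have "real_of_int \<bar>k\<bar> powr (-\<beta>) * real_of_int \<bar>k\<bar> powr (\<beta> - 1) = real_of_int \<bar>k\<bar> powr (-1)"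
      by (simp add: powr_add[symmetric])
    then show ?thesis unfolding f_def g_def
      by (simp add: powr_minus divide_inverse algebra_simps)
  qed
  have fs: "(\<lambda>k. (f k)\<^sup>2) summable_on Z0"
    using assms(2) unfolding in_Hdot_def ef .
  have gs: "(\<lambda>k. (g k)\<^sup>2) summable_on Z0"
    unfolding eg using powr_summable_Z0[of "2 - 2*\<beta>"] assms(1) by simp
  have f0: "\<And>k. k \<in> Z0 \<Longrightarrow> f k \<ge> 0" and g0: "\<And>k. k \<in> Z0 \<Longrightarrow> g k \<ge> 0"
    unfolding f_def g_def by auto
  note cs = CS_infsum[of Z0 f g, OF f0 g0 fs gs]
  have h1: "sqrt (\<Sum>\<^sub>\<infinity>k\<in>Z0. (f k)\<^sup>2) = Hdot_norm (-\<beta>) u"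
    unfolding Hdot_norm_def ef ..
  have h2: "sqrt (\<Sum>\<^sub>\<infinity>k\<in>Z0. (g k)\<^sup>2) = sqrt (\<Sum>\<^sub>\<infinity>k\<in>Z0. real_of_int \<bar>k\<bar> powr (-(2 - 2*\<beta>)))"
    unfolding eg ..
  have h3: "(\<lambda>k. cmod (u k) / real_of_int \<bar>k\<bar>) summable_on Z0"
    using summable_on_cong'[OF cs[THEN conjunct1] efg] .
  have h4: "(\<Sum>\<^sub>\<infinity>k\<in>Z0. f k * g k) = (\<Sum>\<^sub>\<infinity>k\<in>Z0. cmod (u k) / real_of_int \<bar>k\<bar>)"
    by (rule my_infsum_cong) (rule efg)
  show ?thesis using cs[THEN conjunct2] h3 unfolding h1 h2 h4 by simp
qed

definition Bset :: "int \<Rightarrow> int \<Rightarrow> int set" where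
  "Bset k k1 = {k2. k2 \<noteq> 0 \<and> k - k1 - k2 \<noteq> 0}"

lemma g_bound:
  assumes v: "in_Hdot 0 v" and w: "in_Hdot 0 w"
  shows "(\<lambda>k2. cmod (v k2) * cmod (w (k - k1 - k2))) summable_on Bset k k1 \<and>
    (\<Sum>\<^sub>\<infinity>k2\<in>Bset k k1. cmod (v k2) * cmod (w (k - k1 - k2))) \<le> Hdot_norm 0 v * Hdot_norm 0 w"
proof -
  have sub: "Bset k k1 \<subseteq> Z0" unfolding Bset_def by auto
  note vs = L2_0[OF v] and ws = L2_0[OF w]
  have vB: "(\<lambda>k. (cmod (v k))\<^sup>2) summable_on Bset k k1"
    using summable_on_subset[OF vs(1) sub] .
  have wB: "(\<lambda>k. (cmod (w k))\<^sup>2) summable_on Bset k k1"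
    using summable_on_subset[OF ws(1) sub] .
  have re: "(\<lambda>k2. (cmod (w (k - k1 - k2)))\<^sup>2) summable_on Bset k k1 \<longleftrightarrow>
            (\<lambda>k. (cmod (w k))\<^sup>2) summable_on Bset k k1"
    by (rule summable_on_reindex_bij_witness[where i = "\<lambda>k2. k - k1 - k2" and j = "\<lambda>k2. k - k1 - k2"])
       (auto simp: Bset_def)
  have re2: "(\<Sum>\<^sub>\<infinity>k2\<in>Bset k k1. (cmod (w (k - k1 - k2)))\<^sup>2) =
            (\<Sum>\<^sub>\<infinity>k2\<in>Bset k k1. (cmod (w k2))\<^sup>2)"
    by (rule infsum_reindex_bij_witness[where i = "\<lambda>k2. k - k1 - k2" and j = "\<lambda>k2. k - k1 - k2"])
       (auto simp: Bset_def)
  note cs = CS_infsum[of "Bset k k1" "\<lambda>k2. cmod (v k2)" "\<lambda>k2. cmod (w (k - k1 - k2))", OF _ _ vB re[THEN iffD2, OF wB]]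
  have iv: "(\<Sum>\<^sub>\<infinity>k2\<in>Bset k k1. (cmod (v k2))\<^sup>2) \<le> (\<Sum>\<^sub>\<infinity>k2\<in>Z0. (cmod (v k2))\<^sup>2)"
    by (rule infsum_mono2[OF vB vs(1) sub]) auto
  have iw: "(\<Sum>\<^sub>\<infinity>k2\<in>Bset k k1. (cmod (w k2))\<^sup>2) \<le> (\<Sum>\<^sub>\<infinity>k2\<in>Z0. (cmod (w k2))\<^sup>2)"
    by (rule infsum_mono2[OF wB ws(1) sub]) auto
  have "sqrt (\<Sum>\<^sub>\<infinity>k2\<in>Bset k k1. (cmod (v k2))\<^sup>2) * sqrt (\<Sum>\<^sub>\<infinity>k2\<in>Bset k k1. (cmod (w (k - k1 - k2)))\<^sup>2)
      \<le> Hdot_norm 0 v * Hdot_norm 0 w"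
    unfolding re2 vs(2) ws(2)
    by (intro mult_mono real_sqrt_le_mono iv iw) (auto intro!: infsum_nonneg)
  with cs show ?thesis by auto
qed

lemma term_bound:
  assumes b: "\<beta> < 1/2" and u: "in_Hdot (-\<beta>) u" and v: "in_Hdot 0 v" and w: "in_Hdot 0 w"
  defines "M \<equiv> sqrt (\<Sum>\<^sub>\<infinity>k\<in>Z0. real_of_int \<bar>k\<bar> powr (-(2 - 2*\<beta>))) * Hdot_norm (-\<beta>) u * Hdot_norm 0 v * Hdot_norm 0 w"
  shows "(\<lambda>x. norm (R3_term t u v w x)) summable_on R3_index k \<and>
         (\<Sum>\<^sub>\<infinity>x\<in>R3_index k. norm (R3_term t u v w x)) \<le> M"
proof -
  define a where "a k1 = cmod (u k1) / real_of_int \<bar>k1\<bar>" for k1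
  define g where "g k1 k2 = cmod (v k2) * cmod (w (k - k1 - k2))" for k1 k2
  define F where "F = (\<lambda>(k1, k2). a k1 * g k1 k2)"
  define G where "G k1 = a k1 * (\<Sum>\<^sub>\<infinity>k2\<in>Bset k k1. g k1 k2)" for k1
  let ?VW = "Hdot_norm 0 v * Hdot_norm 0 w"
  have a0: "a k1 \<ge> 0" for k1 unfolding a_def by simp
  note ab = a_bound[OF b u, folded a_def]
  have gb: "g k1 summable_on Bset k k1 \<and> (\<Sum>\<^sub>\<infinity>k2\<in>Bset k k1. g k1 k2) \<le> ?VW" for k1
    unfolding g_def using g_bound[OF v w] by blast
  have g0: "g k1 k2 \<ge> 0" for k1 k2 unfolding g_def by simp
  have aVW: "(\<lambda>k1. a k1 * ?VW) summable_on Z0"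
    using ab summable_on_cmult_left by blast
  have G0: "G k1 \<ge> 0" for k1 unfolding G_def using a0 g0 by (simp add: infsum_nonneg)
  have Gle: "G k1 \<le> a k1 * ?VW" for k1 unfolding G_def using gb a0 by (simp add: mult_left_mono)
  have Gs: "G summable_on Z0"
    by (rule summable_on_comparison_test[OF aVW]) (use G0 Gle in auto)
  have Fs: "F summable_on Sigma Z0 (Bset k)"
  proof (rule summable_on_SigmaI[where g = G])
    fix k1 assume "k1 \<in> Z0"
    show "((\<lambda>y. F (k1, y)) has_sum G k1) (Bset k k1)"
      unfolding F_def G_def using has_sum_cmult_right[OF has_sum_infsum[OF gb[THEN conjunct1]]] by simp
  qed (use Gs a0 g0 in \<open>auto simp: F_def\<close>)
  have "infsum F (Sigma Z0 (Bset k)) = infsum (\<lambda>k1. infsum (\<lambda>k2. F (k1, k2)) (Bset k k1)) Z0"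
    by (rule infsum_Sigma_banach[OF Fs, symmetric])
  also have "\<dots> = infsum G Z0"
    unfolding F_def G_def by (simp add: infsum_cmult_right')
  also have "\<dots> \<le> infsum (\<lambda>k1. a k1 * ?VW) Z0"
    by (rule infsum_mono[OF Gs aVW Gle])
  also have "\<dots> = infsum a Z0 * ?VW" by (simp add: infsum_cmult_left')
  also have "\<dots> \<le> M"
  proof -
    have VW0: "?VW \<ge> 0" by (simp add: Hdot_nonneg)
    have "infsum a Z0 * ?VW \<le> (Hdot_norm (-\<beta>) u * sqrt (\<Sum>\<^sub>\<infinity>k\<in>Z0. real_of_int \<bar>k\<bar> powr (-(2 - 2*\<beta>)))) * ?VW"
      by (rule mult_right_mono[OF ab[THEN conjunct2] VW0])
    then show ?thesis unfolding M_def by (simp only: mult_ac)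
  qed
  finally have Fle: "infsum F (Sigma Z0 (Bset k)) \<le> M" .
  have eq: "\<And>p. p \<in> Sigma Z0 (Bset k) \<Longrightarrow>
      norm (R3_term t u v w ((\<lambda>(k1,k2). (k1, k2, k - k1 - k2)) p)) = F p"
    by (auto simp: F_def a_def g_def norm_R3_term)
  have s1: "F summable_on Sigma Z0 (Bset k) \<longleftrightarrow> (\<lambda>x. norm (R3_term t u v w x)) summable_on R3_index k"
    by (rule summable_on_reindex_bij_witness[where i = "\<lambda>(k1,k2,k3). (k1,k2)" and j = "\<lambda>(k1,k2). (k1, k2, k - k1 - k2)"])
       (use eq in \<open>auto simp: R3_index_def Bset_def\<close>)
  have s2: "infsum F (Sigma Z0 (Bset k)) = (\<Sum>\<^sub>\<infinity>x\<in>R3_index k. norm (R3_term t u v w x))"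
    by (rule infsum_reindex_bij_witness[where i = "\<lambda>(k1,k2,k3). (k1,k2)" and j = "\<lambda>(k1,k2). (k1, k2, k - k1 - k2)"])
       (use eq in \<open>auto simp: R3_index_def Bset_def\<close>)
  show ?thesis using s1 s2 Fs Fle by simp
qed


theorem lemma7p18:
  fixes S \<beta> :: real
  assumes "S > 1/2" and "\<beta> < 1/2"
  shows "\<exists>C. \<forall>t u v w. in_Hdot (-\<beta>) u \<longrightarrow> in_Hdot 0 v \<longrightarrow> in_Hdot 0 w \<longrightarrow>
           (\<forall>k\<in>Z0. R3_term t u v w summable_on R3_index k) \<and>
           in_Hdot (-S) (R3 t u v w) \<and>
           Hdot_norm (-S) (R3 t u v w) \<le> C * Hdot_norm (-\<beta>) u * Hdot_norm 0 v * Hdot_norm 0 w"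
proof -
  define A where "A = (\<Sum>\<^sub>\<infinity>k\<in>Z0. real_of_int \<bar>k\<bar> powr (-(2 - 2*\<beta>)))"
  define Bs where "Bs = (\<Sum>\<^sub>\<infinity>k\<in>Z0. real_of_int \<bar>k\<bar> powr (2 * - S))"
  have e2: "2 * - S = -(2 * S)" by simp
  have Ps: "(\<lambda>k. real_of_int \<bar>k\<bar> powr (2 * - S)) summable_on Z0"
    unfolding e2 by (rule powr_summable_Z0) (use assms(1) in simp)
  show ?thesis
  proof (intro exI[of _ "sqrt Bs * sqrt A"] allI impI conjI ballI)
    fix t u v w
    assume u: "in_Hdot (-\<beta>) u" and v: "in_Hdot 0 v" and w: "in_Hdot 0 w"
    define M where "M = sqrt A * Hdot_norm (-\<beta>) u * Hdot_norm 0 v * Hdot_norm 0 w"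
    have M0: "M \<ge> 0" unfolding M_def
      by (intro mult_nonneg_nonneg Hdot_nonneg real_sqrt_ge_zero) (simp add: A_def infsum_nonneg)
    note tb = term_bound[OF assms(2) u v w, folded A_def, folded M_def]
    have sk: "R3_term t u v w summable_on R3_index k" for k
      by (rule abs_summable_summable) (rule tb[of t k, THEN conjunct1])
    then show "\<And>k. k \<in> Z0 \<Longrightarrow> R3_term t u v w summable_on R3_index k" by blast
    have Rle: "cmod (R3 t u v w k) \<le> M" for k
    proof -
      have "cmod (R3 t u v w k) \<le> (\<Sum>\<^sub>\<infinity>x\<in>R3_index k. norm (R3_term t u v w x))"
        unfolding R3_def
        by (rule norm_infsum_le[OF has_sum_infsum[OF sk] has_sum_infsum[OF tb[of t k, THEN conjunct1]]]) (rule order_refl)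
      also have "\<dots> \<le> M" by (rule tb[of t k, THEN conjunct2])
      finally show ?thesis .
    qed
    have PM: "(\<lambda>k. real_of_int \<bar>k\<bar> powr (2 * - S) * M\<^sup>2) summable_on Z0"
      by (rule summable_on_cmult_left[OF Ps])
    have le: "real_of_int \<bar>k\<bar> powr (2 * - S) * (cmod (R3 t u v w k))\<^sup>2 \<le> real_of_int \<bar>k\<bar> powr (2 * - S) * M\<^sup>2" for k
      by (intro mult_left_mono power_mono Rle) simp_all
    have Hs: "(\<lambda>k. real_of_int \<bar>k\<bar> powr (2 * - S) * (cmod (R3 t u v w k))\<^sup>2) summable_on Z0"
      by (rule summable_on_comparison_test[OF PM le]) simp
    then show "in_Hdot (-S) (R3 t u v w)" unfolding in_Hdot_def .
    have "(\<Sum>\<^sub>\<infinity>k\<in>Z0. real_of_int \<bar>k\<bar> powr (2 * - S) * (cmod (R3 t u v w k))\<^sup>2)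
        \<le> (\<Sum>\<^sub>\<infinity>k\<in>Z0. real_of_int \<bar>k\<bar> powr (2 * - S) * M\<^sup>2)"
      by (rule infsum_mono[OF Hs PM le])
    also have "\<dots> = Bs * M\<^sup>2" unfolding Bs_def by (rule infsum_cmult_left')
    finally have "Hdot_norm (-S) (R3 t u v w) \<le> sqrt (Bs * M\<^sup>2)"
      unfolding Hdot_norm_def by (rule real_sqrt_le_mono)
    also have "\<dots> = sqrt Bs * M" using M0 by (simp only: real_sqrt_mult real_sqrt_abs abs_of_nonneg)
    finally show "Hdot_norm (-S) (R3 t u v w) \<le> sqrt Bs * sqrt A * Hdot_norm (-\<beta>) u * Hdot_norm 0 v * Hdot_norm 0 w"
      unfolding M_def by (simp only: mult_ac)
  qed
qed

end
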